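(* Let $A\in\mathbb Z^{d\times n}$ satisfy $\ker(A)\cap\mathbb N^n=\{0\}$ (not necessarily homogeneous). Then the Graver basis $G(A)$ is strongly distance reducing.
   Context: For $z\in\mathbb Z^n$, $z^\pm\in\mathbb N^n$ are the unique vectors with disjoint supports and $z=z^+-z^-$; $\|\cdot\|$ is the $1$-norm. A conformal decomposition of $z\in\ker(A)$ is $z=u+v$ with $u,v\in\ker(A)$, $z^+=u^++v^+$, $z^-=u^-+v^-$; it is proper if $u,v\ne0$. The Graver basis $G(A)$ is the set of nonzero $z\in\ker(A)$ with no proper conformal decomposition. A set $B\subseteq\ker(A)$ is strongly distance reducing if for every nonzero $z\in\ker(A)$ there exist $u\in B$ and $\varepsilon\in\{\pm1\}$ with $z^++\varepsilon u\in\mathbb N^n$ and $\|z^++\varepsilon u-z^-\|<\|z\|$, and there exist $u'\in B$ and $\varepsilon'\in\{\pm1\}$ with $z^-+\varepsilon'u'\in\mathbb N^n$ and $\|z^+-(z^-+\varepsilon'u')\|<\|z\|$. *)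

theory Defs
  imports "HOL-Analysis.Finite_Cartesian_Product"
begin

text \<open>Integer vectors in Z^n are modelled as int ^ 'n (index type 'n finite, n = CARD('n));
  a d x n integer matrix is int ^ 'n ^ 'd.\<close>

definition kerZ :: "int ^ 'n ^ 'd \<Rightarrow> (int ^ 'n) set" where
  "kerZ A = {z. A *v z = 0}"

definition is_nat_vec :: "int ^ 'n \<Rightarrow> bool" where
  "is_nat_vec z \<longleftrightarrow> (\<forall>i. z $ i \<ge> 0)"

definition pos_part :: "int ^ 'n \<Rightarrow> int ^ 'n" where
  "pos_part z = (\<chi> i. max (z $ i) 0)"

definition neg_part :: "int ^ 'n \<Rightarrow> int ^ 'n" where
  "neg_part z = (\<chi> i. max (- (z $ i)) 0)"

definition norm1 :: "int ^ 'n \<Rightarrow> int" where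
  "norm1 z = (\<Sum>i\<in>UNIV. \<bar>z $ i\<bar>)"

definition conformal_decomp :: "int ^ 'n ^ 'd \<Rightarrow> int ^ 'n \<Rightarrow> int ^ 'n \<Rightarrow> int ^ 'n \<Rightarrow> bool" where
  "conformal_decomp A z u v \<longleftrightarrow>
     u \<in> kerZ A \<and> v \<in> kerZ A \<and> z = u + v \<and>
     pos_part z = pos_part u + pos_part v \<and> neg_part z = neg_part u + neg_part v"

definition graver_basis :: "int ^ 'n ^ 'd \<Rightarrow> (int ^ 'n) set" where
  "graver_basis A = {z. z \<in> kerZ A \<and> z \<noteq> 0 \<and>
     \<not> (\<exists>u v. conformal_decomp A z u v \<and> u \<noteq> 0 \<and> v \<noteq> 0)}"

definition strongly_distance_reducing :: "int ^ 'n ^ 'd \<Rightarrow> (int ^ 'n) set \<Rightarrow> bool" where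
  "strongly_distance_reducing A B \<longleftrightarrow> B \<subseteq> kerZ A \<and>
     (\<forall>z \<in> kerZ A. z \<noteq> 0 \<longrightarrow>
        (\<exists>u \<in> B. \<exists>\<epsilon> \<in> {1, -1::int}.
            is_nat_vec (pos_part z + \<epsilon> *s u) \<and>
            norm1 (pos_part z + \<epsilon> *s u - neg_part z) < norm1 z) \<and>
        (\<exists>u' \<in> B. \<exists>\<epsilon>' \<in> {1, -1::int}.
            is_nat_vec (neg_part z + \<epsilon>' *s u') \<and>
            norm1 (pos_part z - (neg_part z + \<epsilon>' *s u')) < norm1 z))"

end

theory Submission
  imports Defs
begin

definition sq :: "int ^ 'n \<Rightarrow> int ^ 'n \<Rightarrow> bool" where
  "sq g z \<longleftrightarrow> (\<forall>i. (0 \<le> g$i \<and> g$i \<le> z$i) \<or> (z$i \<le> g$i \<and> g$i \<le> 0))"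

lemma aux1: "((0::int) \<le> g \<and> g \<le> z) \<or> (z \<le> g \<and> g \<le> 0) \<Longrightarrow> \<bar>z - g\<bar> + \<bar>g\<bar> = \<bar>z\<bar>" by linarith
lemma aux2: "(z::int) = u + v \<and> max z 0 = max u 0 + max v 0 \<and> max (-z) 0 = max (-u) 0 + max (-v) 0 \<Longrightarrow> \<bar>z\<bar> = \<bar>u\<bar> + \<bar>v\<bar>" by linarith

lemma norm1_pos: assumes "(v::int^'n) \<noteq> 0" shows "0 < norm1 v"
proof -
  obtain i where i: "v$i \<noteq> 0" using assms by (auto simp: vec_eq_iff)
  have "\<bar>v$i\<bar> \<le> (\<Sum>j\<in>UNIV. \<bar>v$j\<bar>)"
    by (rule member_le_sum) auto
  then show ?thesis using i unfolding norm1_def by simp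
qed

lemma sq_norm: assumes "sq g z" shows "norm1 (z - g) + norm1 g = norm1 z"
proof -
  have "\<And>i. \<bar>(z-g)$i\<bar> + \<bar>g$i\<bar> = \<bar>z$i\<bar>" using assms unfolding sq_def
    using aux1 by simp
  then show ?thesis unfolding norm1_def by (simp add: sum.distrib[symmetric])
qed

lemma sq_trans: "sq g u \<Longrightarrow> sq u z \<Longrightarrow> sq g z"
  unfolding sq_def by (metis order_trans)

lemma decomp_sq:
  assumes "conformal_decomp A z u v"
  shows "sq u z" "norm1 z = norm1 u + norm1 v"
proof -
  have e: "\<And>i. z$i = u$i + v$i \<and> max (z$i) 0 = max (u$i) 0 + max (v$i) 0
        \<and> max (-z$i) 0 = max (-u$i) 0 + max (-v$i) 0"
  proof -
    fix i
    from assms have "z = u + v" "pos_part z = pos_part u + pos_part v"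
      "neg_part z = neg_part u + neg_part v" unfolding conformal_decomp_def by auto
    then show "?thesis i"
      unfolding pos_part_def neg_part_def vec_eq_iff by auto
  qed
  show "sq u z" unfolding sq_def
  proof
    fix i show "(0 \<le> u$i \<and> u$i \<le> z$i) \<or> (z$i \<le> u$i \<and> u$i \<le> 0)"
      using e[of i] by linarith
  qed
  have "\<And>i. \<bar>z$i\<bar> = \<bar>u$i\<bar> + \<bar>v$i\<bar>" using e aux2 by blast
  then show "norm1 z = norm1 u + norm1 v" unfolding norm1_def by (simp add: sum.distrib)
qed

lemma exists_graver:
  "z \<in> kerZ A \<Longrightarrow> z \<noteq> 0 \<Longrightarrow> \<exists>g\<in>graver_basis A. sq g z"
proof (induction "nat (norm1 z)" arbitrary: z rule: less_induct)
  case less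
  show ?case
  proof (cases "z \<in> graver_basis A")
    case True
    then show ?thesis by (intro bexI[of _ z]) (auto simp: sq_def)
  next
    case False
    then obtain u v where d: "conformal_decomp A z u v" "u \<noteq> 0" "v \<noteq> 0"
      using less.prems unfolding graver_basis_def by auto
    have su: "sq u z" and n: "norm1 z = norm1 u + norm1 v" using decomp_sq[OF d(1)] by auto
    have "0 < norm1 v" "0 < norm1 u" using norm1_pos d by auto
    then have lt: "nat (norm1 u) < nat (norm1 z)" using n by simp
    have "u \<in> kerZ A" using d unfolding conformal_decomp_def by auto
    from less.hyps[OF lt this d(2)] obtain g where "g \<in> graver_basis A" "sq g u" by auto
    then show ?thesis using sq_trans su by blast
  qed
qed

theorem proposition7p2:
  fixes A :: "int ^ 'n ^ 'd"
  assumes "\<forall>z \<in> kerZ A. is_nat_vec z \<longrightarrow> z = 0"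
  shows "strongly_distance_reducing A (graver_basis A)"
  unfolding strongly_distance_reducing_def
proof (intro conjI ballI impI)
  show "graver_basis A \<subseteq> kerZ A" unfolding graver_basis_def by auto
next
  fix z assume z: "z \<in> kerZ A" "z \<noteq> 0"
  then obtain g where g: "g \<in> graver_basis A" "sq g z" using exists_graver by blast
  have g0: "g \<noteq> 0" using g unfolding graver_basis_def by auto
  have pn: "pos_part z - neg_part z = z" unfolding pos_part_def neg_part_def vec_eq_iff by auto
  have lt: "norm1 (z - g) < norm1 z" using sq_norm[OF g(2)] norm1_pos[OF g0] by simp
  show "\<exists>u\<in>graver_basis A. \<exists>\<epsilon>\<in>{1, -1::int}. is_nat_vec (pos_part z + \<epsilon> *s u) \<and>
            norm1 (pos_part z + \<epsilon> *s u - neg_part z) < norm1 z"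
  proof (intro bexI[OF _ g(1)] bexI[of _ "-1"] conjI)
    show "is_nat_vec (pos_part z + (-1) *s g)"
      using g(2) unfolding is_nat_vec_def pos_part_def sq_def by (auto simp: max_def) (metis order_trans)
    have "pos_part z + (-1) *s g - neg_part z = z - g" using pn
      by (simp add: vec_eq_iff algebra_simps)
    then show "norm1 (pos_part z + (-1) *s g - neg_part z) < norm1 z" using lt by simp
  qed auto
  show "\<exists>u\<in>graver_basis A. \<exists>\<epsilon>\<in>{1, -1::int}. is_nat_vec (neg_part z + \<epsilon> *s u) \<and>
            norm1 (pos_part z - (neg_part z + \<epsilon> *s u)) < norm1 z"
  proof (intro bexI[OF _ g(1)] bexI[of _ "1"] conjI)
    show "is_nat_vec (neg_part z + 1 *s g)"
      using g(2) unfolding is_nat_vec_def neg_part_def sq_def by (auto simp: max_def) (metis order_trans)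
    have "pos_part z - (neg_part z + 1 *s g) = z - g" using pn
      by (simp add: vec_eq_iff algebra_simps)
    then show "norm1 (pos_part z - (neg_part z + 1 *s g)) < norm1 z" using lt by (simp only:)
  qed auto
qed

end
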